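(* In the setting of the context, suppose $d\ge K_*$ and $0<T\le e^{c_*d/2}$. For $x_0\in\mathbb{R}^d$ let $X_t(x_0)$ solve $\mathrm{d}X_t=\hat s(X_t)\,\mathrm{d}t+\sqrt2\,\mathrm{d}B_t$, $X_0=x_0$, and let $\tau(x_0)=\inf\{t\ge0:\|X_t(x_0)\|\ge 4\sqrt d\}$. If $\|x_0\|\le 1.1\sqrt d$, then $\mathbb{P}(\tau(x_0)>T)\ge 1-3\alpha e^{-c_* d}$.
   Context: $c_*>0$, $K_*>0$, $\alpha_*\ge1$ are universal constants such that: whenever $d\ge K_*$, $0<T\le e^{c_*d/2}$, $\alpha\ge\alpha_*$ and $B$ is a standard Brownian motion in $\mathbb{R}^d$, $\mathbb{P}(\sup_{t\in[0,T]}\|\int_0^t e^{-\alpha(t-s)}\mathrm{d}B_s\|>0.1\sqrt d)\le 3\alpha e^{-c_*d}$. Set $\alpha=\alpha_*$. $\rho:\mathbb{R}\to[0,1]$ is a fixed smooth function with $\rho(r)=1$ for $r\le4$, $\rho(r)=0$ for $r\ge5$, $|\rho'|\le H$ (universal). For $\mu\in\mathbb{R}^d$ with $\|\mu\|=7\sqrt d$, $\hat s(x)=-\alpha x$ if $\|x\|\le4\sqrt d$, $\hat s(x)=-(x-\mu)$ if $\|x\|\ge5\sqrt d$, and $\hat s(x)=-\rho(\|x\|/\sqrt d)\alpha x-(1-\rho(\|x\|/\sqrt d))(x-\mu)$ otherwise. $B$ is a standard $d$-dimensional Brownian motion. *)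

theory Defs
  imports "HOL-Analysis.Analysis" "HOL-Probability.Probability"
begin

definition std_BM :: "'a measure \<Rightarrow> (real \<Rightarrow> 'a \<Rightarrow> real^'n) \<Rightarrow> bool" where
  "std_BM M B \<longleftrightarrow> prob_space M \<and>
     (\<forall>t. B t \<in> borel_measurable M) \<and>
     (\<forall>\<omega>\<in>space M. B 0 \<omega> = 0 \<and> continuous_on {0..} (\<lambda>t. B t \<omega>)) \<and>
     (\<forall>s t. 0 \<le> s \<and> s < t \<longrightarrow>
        (\<forall>i. distributed M lborel (\<lambda>\<omega>. (B t \<omega> - B s \<omega>) $ i)
                 (\<lambda>x. ennreal (normal_density 0 (sqrt (t - s)) x))) \<and>
        prob_space.indep_vars M (\<lambda>_. borel) (\<lambda>i \<omega>. (B t \<omega> - B s \<omega>) $ i) UNIV) \<and>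
     (\<forall>(k::nat) (tt::nat \<Rightarrow> real). 0 \<le> tt 0 \<and> (\<forall>i<k. tt i \<le> tt (Suc i)) \<longrightarrow>
        prob_space.indep_vars M (\<lambda>_. borel) (\<lambda>i \<omega>. B (tt (Suc i)) \<omega> - B (tt i) \<omega>) {..<k})"

text \<open>Pathwise (Wiener) integral of a deterministic kernel:
  int_0^t exp(-a(t-s)) dB_s = B_t - a * int_0^t exp(-a(t-s)) B_s ds
  (integration by parts).\<close>
definition ou_integral :: "real \<Rightarrow> (real \<Rightarrow> 'a \<Rightarrow> real^'n) \<Rightarrow> real \<Rightarrow> 'a \<Rightarrow> real^'n" where
  "ou_integral a B t \<omega> = B t \<omega> - a *\<^sub>R integral {0..t} (\<lambda>s. exp (- a * (t - s)) *\<^sub>R B s \<omega>)"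

definition smooth_real :: "(real \<Rightarrow> real) \<Rightarrow> bool" where
  "smooth_real f \<longleftrightarrow> (\<forall>k x. ((deriv ^^ k) f) differentiable (at x))"

definition s_hat :: "real \<Rightarrow> (real \<Rightarrow> real) \<Rightarrow> real^'n \<Rightarrow> real^'n \<Rightarrow> real^'n" where
  "s_hat a \<rho> \<mu> x =
     (let d = real CARD('n) in
      if norm x \<le> 4 * sqrt d then - (a *\<^sub>R x)
      else if norm x \<ge> 5 * sqrt d then - (x - \<mu>)
      else - (\<rho> (norm x / sqrt d) *\<^sub>R (a *\<^sub>R x)) - (1 - \<rho> (norm x / sqrt d)) *\<^sub>R (x - \<mu>))"

definition exit_time :: "(real \<Rightarrow> 'a \<Rightarrow> real^'n) \<Rightarrow> real \<Rightarrow> 'a \<Rightarrow> ereal" where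
  "exit_time X r \<omega> = Inf (ereal ` {t. 0 \<le> t \<and> norm (X t \<omega>) \<ge> r})"

end

theory Submission imports Defs begin

lemma dense_le:
  fixes f :: "real \<Rightarrow> real"
  assumes f: "continuous_on {0..T} f" and T: "0 < T"
    and q: "\<And>q. q \<in> \<rat> \<Longrightarrow> q \<in> {0..T} \<Longrightarrow> f q \<le> c" and t: "t \<in> {0..T}"
  shows "f t \<le> c"
proof -
  have "{0<..<T} \<inter> closure \<rat> \<subseteq> closure ({0<..<T} \<inter> \<rat>)"
    by (rule open_Int_closure_subset) simp
  hence "{0<..<T} \<subseteq> closure ({0<..<T} \<inter> \<rat>)" by (simp add: Rats_closure_real)
  hence "closure {0<..<T} \<subseteq> closure ({0<..<T} \<inter> \<rat>)"
    by (metis closure_minimal closed_closure)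
  hence "{0..T} \<subseteq> closure ({0<..<T} \<inter> \<rat>)" using T by simp
  moreover have "closure ({0<..<T} \<inter> \<rat>) \<subseteq> {x\<in>{0..T}. f x \<le> c}"
  proof (rule closure_minimal)
    show "{0<..<T} \<inter> \<rat> \<subseteq> {x \<in> {0..T}. f x \<le> c}" using q by auto
    show "closed {x \<in> {0..T}. f x \<le> c}"
      by (rule continuous_on_closed_Collect_le) (auto intro: f)
  qed
  ultimately show ?thesis using t by auto
qed

lemma joint_meas:
  fixes B :: "real \<Rightarrow> 'a \<Rightarrow> real^'n" and g :: "real \<Rightarrow> real"
  assumes Bm: "\<And>t. B t \<in> borel_measurable M"
    and Bc: "\<And>\<omega>. \<omega> \<in> space M \<Longrightarrow> continuous_on {0..} (\<lambda>t. B t \<omega>)"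
    and g: "continuous_on UNIV g"
  shows "(\<lambda>(\<omega>,s). indicator {0..t} s *\<^sub>R (g s *\<^sub>R B s \<omega>)) \<in> borel_measurable (M \<Otimes>\<^sub>M lborel)"
proof (rule borel_measurable_LIMSEQ_metric)
  define \<phi> where "\<phi> k s = max 0 (real_of_int \<lfloor>real (Suc k) * s\<rfloor> / real (Suc k))" for k s
  show "(\<lambda>(\<omega>,s). indicator {0..t} s *\<^sub>R (g s *\<^sub>R B (\<phi> k s) \<omega>)) \<in> borel_measurable (M \<Otimes>\<^sub>M lborel)" for k
  proof -
    have gm: "g \<in> borel_measurable borel" using g by (simp add: borel_measurable_continuous_onI)
    have fl: "(\<lambda>(\<omega>::'a,s::real). \<lfloor>real (Suc k) * s\<rfloor>) \<in> measurable (M \<Otimes>\<^sub>M lborel) (count_space UNIV)"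
      by measurable
    have "(\<lambda>x. (\<lambda>i (\<omega>,s). B (max 0 (real_of_int i / real (Suc k))) \<omega>) ((\<lambda>(\<omega>::'a,s::real). \<lfloor>real (Suc k) * s\<rfloor>) x) x)
       \<in> borel_measurable (M \<Otimes>\<^sub>M lborel)"
    proof (rule measurable_compose_countable'[OF _ fl])
      show "(\<lambda>x. (\<lambda>(\<omega>, s). B (max 0 (real_of_int i / real (Suc k))) \<omega>) x) \<in> borel_measurable (M \<Otimes>\<^sub>M lborel)" for i
        using Bm by (simp add: case_prod_beta')
    qed simp
    hence "(\<lambda>(\<omega>,s). B (\<phi> k s) \<omega>) \<in> borel_measurable (M \<Otimes>\<^sub>M lborel)"
      by (simp add: \<phi>_def case_prod_beta')
    thus ?thesis using gm by measurable
  qed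
  fix x :: "'a \<times> real" assume x: "x \<in> space (M \<Otimes>\<^sub>M lborel)"
  obtain \<omega> s where xs: "x = (\<omega>, s)" and \<omega>: "\<omega> \<in> space M" using x by (cases x) (auto simp: space_pair_measure)
  show "(\<lambda>k. (\<lambda>(\<omega>,s). indicator {0..t} s *\<^sub>R (g s *\<^sub>R B (\<phi> k s) \<omega>)) x) \<longlonglongrightarrow>
        (\<lambda>(\<omega>,s). indicator {0..t} s *\<^sub>R (g s *\<^sub>R B s \<omega>)) x"
  proof (cases "s \<in> {0..t}")
    case False thus ?thesis by (simp add: xs)
  next
    case True
    have lim: "(\<lambda>k. \<phi> k s) \<longlonglongrightarrow> s"
    proof -
      have "(\<lambda>k. real_of_int \<lfloor>real (Suc k) * s\<rfloor> / real (Suc k)) \<longlonglongrightarrow> s"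
      proof (rule tendsto_sandwich[where f = "\<lambda>k. s - 1 / real (Suc k)" and h = "\<lambda>k. s"])
        show "\<forall>\<^sub>F k in sequentially. s - 1 / real (Suc k) \<le> real_of_int \<lfloor>real (Suc k) * s\<rfloor> / real (Suc k)"
        proof (intro always_eventually allI)
          fix k
          have h: "real (Suc k) * s - 1 \<le> real_of_int \<lfloor>real (Suc k) * s\<rfloor>" by linarith
          have "s - 1 / real (Suc k) = (real (Suc k) * s - 1) / real (Suc k)"
            by (simp add: field_simps)
          also have "\<dots> \<le> real_of_int \<lfloor>real (Suc k) * s\<rfloor> / real (Suc k)"
            by (rule divide_right_mono[OF h]) simp
          finally show "s - 1 / real (Suc k) \<le> real_of_int \<lfloor>real (Suc k) * s\<rfloor> / real (Suc k)" .
        qed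
        show "\<forall>\<^sub>F k in sequentially. real_of_int \<lfloor>real (Suc k) * s\<rfloor> / real (Suc k) \<le> s"
        proof (intro always_eventually allI)
          fix k
          have h: "real_of_int \<lfloor>real (Suc k) * s\<rfloor> \<le> real (Suc k) * s" by linarith
          have "real_of_int \<lfloor>real (Suc k) * s\<rfloor> / real (Suc k) \<le> real (Suc k) * s / real (Suc k)"
            by (rule divide_right_mono[OF h]) simp
          thus "real_of_int \<lfloor>real (Suc k) * s\<rfloor> / real (Suc k) \<le> s" by simp
        qed
        show "(\<lambda>k. s - 1 / real (Suc k)) \<longlonglongrightarrow> s"
        proof -
          have "(\<lambda>k. 1 / real (Suc k)) \<longlonglongrightarrow> 0"
            using LIMSEQ_Suc[OF lim_inverse_n'] by simp
          from tendsto_diff[OF tendsto_const this] show ?thesis by simp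
        qed
      qed simp
      hence "(\<lambda>k. max 0 (real_of_int \<lfloor>real (Suc k) * s\<rfloor> / real (Suc k))) \<longlonglongrightarrow> max 0 s"
        by (intro tendsto_max tendsto_const)
      thus ?thesis using True by (simp add: \<phi>_def)
    qed
    have "(\<lambda>k. B (\<phi> k s) \<omega>) \<longlonglongrightarrow> B s \<omega>"
      using continuous_on_tendsto_compose[OF Bc[OF \<omega>] lim] True by (simp add: \<phi>_def o_def)
    hence "(\<lambda>k. indicator {0..t} s *\<^sub>R (g s *\<^sub>R B (\<phi> k s) \<omega>)) \<longlonglongrightarrow> indicator {0..t} s *\<^sub>R (g s *\<^sub>R B s \<omega>)"
      by (intro tendsto_scaleR tendsto_const)
    thus ?thesis by (simp add: xs)
  qed
qed

lemma int_meas: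
  fixes B :: "real \<Rightarrow> 'a \<Rightarrow> real^'n" and g :: "real \<Rightarrow> real"
  assumes Bm: "\<And>t. B t \<in> borel_measurable M"
    and Bc: "\<And>\<omega>. \<omega> \<in> space M \<Longrightarrow> continuous_on {0..} (\<lambda>t. B t \<omega>)"
    and g: "continuous_on UNIV g" and t: "0 \<le> t"
  shows "(\<lambda>\<omega>. integral {0..t} (\<lambda>s. g s *\<^sub>R B s \<omega>)) \<in> borel_measurable M"
proof -
  have m: "(\<lambda>\<omega>. \<integral>s. indicator {0..t} s *\<^sub>R (g s *\<^sub>R B s \<omega>) \<partial>lborel) \<in> borel_measurable M"
    by (rule lborel.borel_measurable_lebesgue_integral[OF joint_meas[OF Bm Bc g]])
  show ?thesis
  proof (rule measurable_cong[THEN iffD1, OF _ m])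
    fix \<omega> assume \<omega>: "\<omega> \<in> space M"
    have cont: "continuous_on {0..t} (\<lambda>s. g s *\<^sub>R B s \<omega>)"
      by (intro continuous_on_scaleR continuous_on_subset[OF g] continuous_on_subset[OF Bc[OF \<omega>]]) auto
    have si: "set_integrable lborel {0..t} (\<lambda>s. g s *\<^sub>R B s \<omega>)"
      unfolding set_integrable_def using borel_integrable_compact[OF compact_Icc cont] .
    show "(\<integral>s. indicator {0..t} s *\<^sub>R (g s *\<^sub>R B s \<omega>) \<partial>lborel) = integral {0..t} (\<lambda>s. g s *\<^sub>R B s \<omega>)"
      using set_borel_integral_eq_integral(2)[OF si] by (simp add: set_lebesgue_integral_def)
  qed
qed

lemma ode_unique:
  fixes x b :: "real \<Rightarrow> real^'n" and a c t1 :: real and x0 :: "real^'n"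
  assumes xc: "continuous_on {0..t1} x" and bc: "continuous_on {0..t1} b" and a: "a > 0"
    and eq: "\<And>u. u \<in> {0..t1} \<Longrightarrow> x u = x0 - a *\<^sub>R integral {0..u} x + c *\<^sub>R b u"
    and u: "u \<in> {0..t1}"
  shows "x u = exp (- a * u) *\<^sub>R x0 + c *\<^sub>R (b u - (a * exp (- a * u)) *\<^sub>R integral {0..u} (\<lambda>s. exp (a * s) *\<^sub>R b s))"
proof -
  define P where "P u = integral {0..u} x" for u
  define J where "J u = integral {0..u} (\<lambda>s. exp (a * s) *\<^sub>R b s)" for u
  define \<Phi> where "\<Phi> u = exp (a * u) *\<^sub>R P u - ((exp (a * u) - 1) / a) *\<^sub>R x0 - c *\<^sub>R J u" for u
  have ebc: "continuous_on {0..t1} (\<lambda>s. exp (a * s) *\<^sub>R b s)"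
    by (intro continuous_intros bc)
  have d0: "(\<Phi> has_derivative (\<lambda>h. 0)) (at v within {0..t1})" if v: "v \<in> {0..t1}" for v
  proof -
    have dP: "(P has_vector_derivative x v) (at v within {0..t1})"
      unfolding P_def by (rule integral_has_vector_derivative[OF xc v])
    have dJ: "(J has_vector_derivative exp (a * v) *\<^sub>R b v) (at v within {0..t1})"
      unfolding J_def by (rule integral_has_vector_derivative[OF ebc v])
    have dE: "((\<lambda>u. exp (a * u)) has_field_derivative exp (a * v) * a) (at v within {0..t1})"
      by (auto intro!: derivative_eq_intros)
    have dC: "((\<lambda>u. (exp (a * u) - 1) / a) has_field_derivative exp (a * v)) (at v within {0..t1})"
      using a by (auto intro!: derivative_eq_intros)
    have "(\<Phi> has_vector_derivative
        ((exp (a * v) *\<^sub>R x v + (exp (a * v) * a) *\<^sub>R P v) - (((exp (a * v) - 1) / a) *\<^sub>R 0 + exp (a * v) *\<^sub>R x0)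
         - (c *\<^sub>R (exp (a * v) *\<^sub>R b v) + 0 *\<^sub>R J v))) (at v within {0..t1})"
      unfolding \<Phi>_def
      by (intro has_vector_derivative_diff has_vector_derivative_scaleR dE dP dC dJ
          has_vector_derivative_const DERIV_const)
    moreover have "(exp (a * v) *\<^sub>R x v + (exp (a * v) * a) *\<^sub>R P v) - (((exp (a * v) - 1) / a) *\<^sub>R 0 + exp (a * v) *\<^sub>R x0)
         - (c *\<^sub>R (exp (a * v) *\<^sub>R b v) + 0 *\<^sub>R J v) = 0"
    proof -
      have e: "x v + a *\<^sub>R P v = x0 + c *\<^sub>R b v"
        using eq[OF v] unfolding P_def[symmetric] by (simp add: algebra_simps)
      have "exp (a * v) *\<^sub>R (x v + a *\<^sub>R P v) = exp (a * v) *\<^sub>R (x0 + c *\<^sub>R b v)"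
        using e by simp
      thus ?thesis by (simp add: algebra_simps)
    qed
    ultimately have "(\<Phi> has_vector_derivative 0) (at v within {0..t1})" by simp
    thus ?thesis by (simp add: has_vector_derivative_def)
  qed
  obtain k where k: "\<And>v. v \<in> {0..t1} \<Longrightarrow> \<Phi> v = k"
    using has_derivative_zero_constant[OF convex_real_interval(5) d0] by blast
  have t1: "0 \<le> t1" using u by auto
  have "\<Phi> 0 = 0" by (simp add: \<Phi>_def P_def J_def)
  hence "\<Phi> u = 0" using k[OF u] k[of 0] t1 by auto
  hence Pu: "exp (a * u) *\<^sub>R P u = ((exp (a * u) - 1) / a) *\<^sub>R x0 + c *\<^sub>R J u"
    by (simp add: \<Phi>_def algebra_simps)
  have "P u = exp (- a * u) *\<^sub>R (exp (a * u) *\<^sub>R P u)"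
    by (simp add: exp_minus)
  also have "\<dots> = (exp (- a * u) * ((exp (a * u) - 1) / a)) *\<^sub>R x0 + (exp (- a * u) * c) *\<^sub>R J u"
    by (simp add: Pu algebra_simps)
  finally have Pu2: "P u = (exp (- a * u) * ((exp (a * u) - 1) / a)) *\<^sub>R x0 + (exp (- a * u) * c) *\<^sub>R J u" .
  have ee: "exp (- a * u) * ((exp (a * u) - 1) / a) = (1 - exp (- a * u)) / a"
    using a by (simp add: exp_minus field_simps)
  have aP: "a *\<^sub>R P u = (1 - exp (- a * u)) *\<^sub>R x0 + (a * exp (- a * u) * c) *\<^sub>R J u"
  proof -
    have "a *\<^sub>R P u = (a * ((1 - exp (- a * u)) / a)) *\<^sub>R x0 + (a * (exp (- a * u) * c)) *\<^sub>R J u"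
      unfolding Pu2 ee by (simp add: scaleR_add_right)
    also have "a * ((1 - exp (- a * u)) / a) = 1 - exp (- a * u)" using a by simp
    finally show ?thesis by (simp add: mult.assoc)
  qed
  have xu: "x u = x0 - a *\<^sub>R P u + c *\<^sub>R b u" using eq[OF u] by (simp add: P_def)
  show ?thesis unfolding xu aP J_def[symmetric] by (simp add: algebra_simps)
qed


lemma ou_alt:
  "ou_integral a B t \<omega> = B t \<omega> - (a * exp (- a * t)) *\<^sub>R integral {0..t} (\<lambda>s. exp (a * s) *\<^sub>R B s \<omega>)"
proof -
  have "(\<lambda>s. exp (- a * (t - s)) *\<^sub>R B s \<omega>) = (\<lambda>s. exp (- a * t) *\<^sub>R (exp (a * s) *\<^sub>R B s \<omega>))"
  proof
    fix s
    have "exp (- a * (t - s)) = exp (- a * t) * exp (a * s)"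
      by (simp add: exp_add[symmetric] algebra_simps)
    thus "exp (- a * (t - s)) *\<^sub>R B s \<omega> = exp (- a * t) *\<^sub>R (exp (a * s) *\<^sub>R B s \<omega>)" by simp
  qed
  hence "integral {0..t} (\<lambda>s. exp (- a * (t - s)) *\<^sub>R B s \<omega>) = exp (- a * t) *\<^sub>R integral {0..t} (\<lambda>s. exp (a * s) *\<^sub>R B s \<omega>)"
    by (simp only: integral_cmul)
  thus ?thesis unfolding ou_integral_def by (simp only: scaleR_scaleR)
qed

lemma ou_cont:
  fixes B :: "real \<Rightarrow> 'a \<Rightarrow> real^'n"
  assumes "continuous_on {0..b} (\<lambda>s. B s \<omega>)"
  shows "continuous_on {0..b} (\<lambda>t. ou_integral a B t \<omega>)"
proof -
  have i: "(\<lambda>s. exp (a * s) *\<^sub>R B s \<omega>) integrable_on {0..b}"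
    by (intro integrable_continuous_interval continuous_intros assms)
  show ?thesis unfolding ou_alt
    by (intro continuous_intros assms indefinite_integral_continuous_1[OF i])
qed

theorem lemma1:
  fixes c K \<alpha> H T :: real
    and \<rho> :: "real \<Rightarrow> real"
    and \<mu> x0 :: "real^'n"
    and M :: "'a measure"
    and B X :: "real \<Rightarrow> 'a \<Rightarrow> real^'n"
  assumes const_pos: "c > 0" "K > 0" "\<alpha> \<ge> 1"
    and universal: "\<And>(M' :: 'a measure) (B' :: real \<Rightarrow> 'a \<Rightarrow> real^'n) T' a.
        real CARD('n) \<ge> K \<Longrightarrow> 0 < T' \<Longrightarrow> T' \<le> exp (c * real CARD('n) / 2) \<Longrightarrow>
        a \<ge> \<alpha> \<Longrightarrow> std_BM M' B' \<Longrightarrow>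
        measure M' {\<omega> \<in> space M'. (SUP t\<in>{0..T'}. norm (ou_integral a B' t \<omega>))
                                    > 0.1 * sqrt (real CARD('n))}
          \<le> 3 * a * exp (- c * real CARD('n))"
    and rho_smooth: "smooth_real \<rho>"
    and rho_range: "\<And>r. 0 \<le> \<rho> r \<and> \<rho> r \<le> 1"
    and rho_one: "\<And>r. r \<le> 4 \<Longrightarrow> \<rho> r = 1"
    and rho_zero: "\<And>r. r \<ge> 5 \<Longrightarrow> \<rho> r = 0"
    and rho_deriv: "\<And>r. \<bar>deriv \<rho> r\<bar> \<le> H"
    and mu: "norm \<mu> = 7 * sqrt (real CARD('n))"
    and d: "real CARD('n) \<ge> K"
    and T: "0 < T" "T \<le> exp (c * real CARD('n) / 2)"
    and BM: "std_BM M B"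
    and X_cont: "\<And>\<omega>. \<omega> \<in> space M \<Longrightarrow> continuous_on {0..} (\<lambda>t. X t \<omega>)"
    and X_sde: "\<And>\<omega> t. \<omega> \<in> space M \<Longrightarrow> 0 \<le> t \<Longrightarrow>
        X t \<omega> = x0 + integral {0..t} (\<lambda>s. s_hat \<alpha> \<rho> \<mu> (X s \<omega>)) + sqrt 2 *\<^sub>R B t \<omega>"
    and x0: "norm x0 \<le> 1.1 * sqrt (real CARD('n))"
  shows "measure M {\<omega> \<in> space M. exit_time X (4 * sqrt (real CARD('n))) \<omega> > ereal T}
           \<ge> 1 - 3 * \<alpha> * exp (- c * real CARD('n))"
proof -
  define d where "d = real CARD('n)"
  define r where "r = 4 * sqrt d"
  have dpos: "d > 0" by (simp add: d_def)
  have sd: "sqrt d > 0" using dpos by simp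
  have PS: "prob_space M" and Bm: "\<And>t. B t \<in> borel_measurable M"
    and Bc: "\<And>\<omega>. \<omega> \<in> space M \<Longrightarrow> continuous_on {0..} (\<lambda>t. B t \<omega>)"
    and B0: "\<And>\<omega>. \<omega> \<in> space M \<Longrightarrow> B 0 \<omega> = 0"
    using BM unfolding std_BM_def by auto
  interpret P: prob_space M by (rule PS)
  have apos: "\<alpha> > 0" using const_pos by simp
  define Y where "Y t \<omega> = exp (- \<alpha> * t) *\<^sub>R x0 + sqrt 2 *\<^sub>R ou_integral \<alpha> B t \<omega>" for t \<omega>
  have Bcb: "continuous_on {0..b} (\<lambda>t. B t \<omega>)" if "\<omega> \<in> space M" for \<omega> b
    by (rule continuous_on_subset[OF Bc[OF that]]) auto
  have Xcb: "continuous_on {0..b} (\<lambda>t. X t \<omega>)" if "\<omega> \<in> space M" for \<omega> b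
    by (rule continuous_on_subset[OF X_cont[OF that]]) auto
  have Ycb: "continuous_on {0..b} (\<lambda>t. Y t \<omega>)" if "\<omega> \<in> space M" for \<omega> b
    unfolding Y_def by (intro continuous_intros ou_cont Bcb that)
  have X0: "X 0 \<omega> = x0" if "\<omega> \<in> space M" for \<omega>
    using X_sde[OF that, of 0] B0[OF that] by simp
  have XY: "X u \<omega> = Y u \<omega>"
    if \<omega>: "\<omega> \<in> space M" and le: "\<And>u. u \<in> {0..t1} \<Longrightarrow> norm (X u \<omega>) \<le> r" and u: "u \<in> {0..t1}" for \<omega> t1 u
  proof -
    have eq: "X v \<omega> = x0 - \<alpha> *\<^sub>R integral {0..v} (\<lambda>s. X s \<omega>) + sqrt 2 *\<^sub>R B v \<omega>"
      if v: "v \<in> {0..t1}" for v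
    proof -
      have "integral {0..v} (\<lambda>s. s_hat \<alpha> \<rho> \<mu> (X s \<omega>)) = integral {0..v} (\<lambda>s. - (\<alpha> *\<^sub>R X s \<omega>))"
      proof (rule integral_cong)
        fix s assume "s \<in> {0..v}"
        hence "norm (X s \<omega>) \<le> 4 * sqrt (real CARD('n))" using le[of s] v by (auto simp: r_def d_def)
        thus "s_hat \<alpha> \<rho> \<mu> (X s \<omega>) = - (\<alpha> *\<^sub>R X s \<omega>)" by (simp add: s_hat_def Let_def)
      qed
      thus ?thesis using X_sde[OF \<omega>, of v] v by (simp add: integral_neg)
    qed
    show ?thesis
      using ode_unique[OF Xcb[OF \<omega>] Bcb[OF \<omega>] apos eq u]
      by (simp add: Y_def ou_alt)
  qed
  have x0d: "norm x0 \<le> 1.1 * sqrt d" using x0 by (simp add: d_def)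
  have x0r: "norm x0 < r" using x0d sd unfolding r_def by linarith
  define E where "E = {\<omega> \<in> space M. exit_time X (4 * sqrt (real CARD('n))) \<omega> > ereal T}"
  define EY where "EY = {\<omega> \<in> space M. \<forall>t\<in>{0..T}. norm (Y t \<omega>) < r}"
  have EsubEY: "E \<subseteq> EY"
  proof
    fix \<omega> assume "\<omega> \<in> E"
    hence \<omega>: "\<omega> \<in> space M" and ex: "exit_time X r \<omega> > ereal T" by (auto simp: E_def r_def d_def)
    have lt: "norm (X t \<omega>) < r" if t: "t \<in> {0..T}" for t
    proof (rule ccontr)
      assume "\<not> norm (X t \<omega>) < r"
      hence "ereal t \<in> ereal ` {t. 0 \<le> t \<and> norm (X t \<omega>) \<ge> r}" using t by auto
      hence "exit_time X r \<omega> \<le> ereal t" unfolding exit_time_def by (rule Inf_lower)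
      hence "ereal T < ereal t" using ex by (meson less_le_trans)
      thus False using t by simp
    qed
    have "norm (Y t \<omega>) < r" if t: "t \<in> {0..T}" for t
      using XY[OF \<omega> _ t] lt t less_imp_le by (metis)
    thus "\<omega> \<in> EY" using \<omega> by (auto simp: EY_def)
  qed
  have EYsubE: "EY \<subseteq> E"
  proof
    fix \<omega> assume "\<omega> \<in> EY"
    hence \<omega>: "\<omega> \<in> space M" and yl: "\<And>t. t \<in> {0..T} \<Longrightarrow> norm (Y t \<omega>) < r" by (auto simp: EY_def)
    have lt: "norm (X t \<omega>) < r" if t: "t \<in> {0..T}" for t
    proof (rule ccontr)
      assume nt: "\<not> norm (X t \<omega>) < r"
      define S where "S = {u \<in> {0..T}. r \<le> norm (X u \<omega>)}"
      have Sne: "S \<noteq> {}" using nt t by (auto simp: S_def)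
      have Scl: "closed S" unfolding S_def
        by (rule continuous_on_closed_Collect_le) (auto intro!: continuous_intros Xcb[OF \<omega>])
      have Sbdd: "bdd_below S" by (auto simp: S_def bdd_below_def)
      define \<sigma> where "\<sigma> = Inf S"
      have \<sigma>S: "\<sigma> \<in> S" unfolding \<sigma>_def by (rule closed_contains_Inf[OF Sne Sbdd Scl])
      have below: "norm (X u \<omega>) < r" if "u \<in> {0..<\<sigma>}" for u
      proof (rule ccontr)
        assume "\<not> norm (X u \<omega>) < r"
        hence "u \<in> S" using that \<sigma>S by (auto simp: S_def)
        hence "\<sigma> \<le> u" unfolding \<sigma>_def by (rule cInf_lower[OF _ Sbdd])
        thus False using that by auto
      qed
      have \<sigma>pos: "0 < \<sigma>"
      proof (rule ccontr)
        assume "\<not> 0 < \<sigma>"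
        hence "\<sigma> = 0" using \<sigma>S by (auto simp: S_def)
        thus False using \<sigma>S X0[OF \<omega>] x0r by (auto simp: S_def)
      qed
      have "closure {0..<\<sigma>} \<subseteq> {u \<in> {0..\<sigma>}. norm (X u \<omega>) \<le> r}"
      proof (rule closure_minimal)
        show "{0..<\<sigma>} \<subseteq> {u \<in> {0..\<sigma>}. norm (X u \<omega>) \<le> r}" using below by (auto intro: less_imp_le)
        show "closed {u \<in> {0..\<sigma>}. norm (X u \<omega>) \<le> r}"
          by (rule continuous_on_closed_Collect_le) (auto intro!: continuous_intros Xcb[OF \<omega>])
      qed
      hence le: "\<And>u. u \<in> {0..\<sigma>} \<Longrightarrow> norm (X u \<omega>) \<le> r" using \<sigma>pos by auto
      have "X \<sigma> \<omega> = Y \<sigma> \<omega>" by (rule XY[OF \<omega> le]) (use \<sigma>pos in auto)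
      moreover have "\<sigma> \<in> {0..T}" using \<sigma>S by (auto simp: S_def)
      ultimately have "norm (X \<sigma> \<omega>) < r" using yl by auto
      thus False using \<sigma>S by (auto simp: S_def)
    qed
    define S' where "S' = {t. 0 \<le> t \<and> norm (X t \<omega>) \<ge> r}"
    have "ereal T < exit_time X r \<omega>"
    proof (cases "S' = {}")
      case True
      thus ?thesis unfolding exit_time_def S'_def[symmetric] by (simp add: top_ereal_def)
    next
      case False
      have Scl: "closed S'"
      proof -
        have "S' = {u \<in> {0..}. r \<le> norm (X u \<omega>)}" by (auto simp: S'_def)
        also have "closed \<dots>"
          by (rule continuous_on_closed_Collect_le) (auto intro!: continuous_intros X_cont[OF \<omega>])
        finally show ?thesis .
      qed
      have Sbdd: "bdd_below S'" by (auto simp: S'_def bdd_below_def)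
      have mS: "Inf S' \<in> S'" by (rule closed_contains_Inf[OF False Sbdd Scl])
      have mT: "T < Inf S'"
      proof (rule ccontr)
        assume "\<not> T < Inf S'"
        thus False using lt[of "Inf S'"] mS by (auto simp: S'_def)
      qed
      have "ereal (Inf S') \<le> exit_time X r \<omega>" unfolding exit_time_def S'_def[symmetric]
        by (rule Inf_greatest) (auto intro: cInf_lower[OF _ Sbdd])
      moreover have "ereal T < ereal (Inf S')" using mT by simp
      ultimately show ?thesis by (meson less_le_trans)
    qed
    thus "\<omega> \<in> E" using \<omega> by (simp add: E_def r_def d_def)
  qed
  have EEY: "E = EY" using EsubEY EYsubE by blast
  have oum: "(\<lambda>\<omega>. ou_integral \<alpha> B q \<omega>) \<in> borel_measurable M" if q: "0 \<le> q" for q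
  proof -
    have i: "(\<lambda>\<omega>. integral {0..q} (\<lambda>s. exp (- \<alpha> * (q - s)) *\<^sub>R B s \<omega>)) \<in> borel_measurable M"
      by (rule int_meas[OF Bm Bc _ q]) (auto intro!: continuous_intros)
    show ?thesis unfolding ou_integral_def
      by (intro borel_measurable_diff borel_measurable_scaleR borel_measurable_const Bm i)
  qed
  have Ym: "(\<lambda>\<omega>. norm (Y q \<omega>)) \<in> borel_measurable M" if q: "0 \<le> q" for q
  proof -
    have [measurable]: "(\<lambda>\<omega>. ou_integral \<alpha> B q \<omega>) \<in> borel_measurable M" by (rule oum[OF q])
    show ?thesis unfolding Y_def by measurable
  qed
  have ctR: "countable (\<rat> \<inter> {0..T})" by (intro countable_Int1 countable_rat)
  have neR: "\<rat> \<inter> {0..T} \<noteq> {}" using T(1) by (auto intro!: exI[of _ 0])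
  define cc where "cc n = r - 1 / real (Suc n)" for n
  have EY_eq: "EY = (\<Union>n. \<Inter>q\<in>\<rat> \<inter> {0..T}. {\<omega> \<in> space M. norm (Y q \<omega>) \<le> cc n})"
  proof
    show "EY \<subseteq> (\<Union>n. \<Inter>q\<in>\<rat> \<inter> {0..T}. {\<omega> \<in> space M. norm (Y q \<omega>) \<le> cc n})"
    proof
      fix \<omega> assume "\<omega> \<in> EY"
      hence \<omega>: "\<omega> \<in> space M" and yl: "\<And>t. t \<in> {0..T} \<Longrightarrow> norm (Y t \<omega>) < r" by (auto simp: EY_def)
      obtain tm where tm: "tm \<in> {0..T}" and mx: "\<And>y. y \<in> {0..T} \<Longrightarrow> norm (Y y \<omega>) \<le> norm (Y tm \<omega>)"
        using continuous_attains_sup[OF compact_Icc _ continuous_on_norm[OF Ycb[OF \<omega>, of T]]] T(1) by auto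
      have "0 < r - norm (Y tm \<omega>)" using yl[OF tm] by simp
      then obtain n :: nat where n: "n > 0" "inverse (real n) < r - norm (Y tm \<omega>)"
        using ex_inverse_of_nat_less by blast
      have "Suc (n - 1) = n" using n by simp
      hence "cc (n - 1) = r - inverse (real n)" by (simp add: cc_def inverse_eq_divide)
      hence "\<forall>q\<in>\<rat> \<inter> {0..T}. norm (Y q \<omega>) \<le> cc (n - 1)" using mx n by fastforce
      thus "\<omega> \<in> (\<Union>n. \<Inter>q\<in>\<rat> \<inter> {0..T}. {\<omega> \<in> space M. norm (Y q \<omega>) \<le> cc n})" using \<omega> by blast
    qed
    show "(\<Union>n. \<Inter>q\<in>\<rat> \<inter> {0..T}. {\<omega> \<in> space M. norm (Y q \<omega>) \<le> cc n}) \<subseteq> EY"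
    proof
      fix \<omega> assume "\<omega> \<in> (\<Union>n. \<Inter>q\<in>\<rat> \<inter> {0..T}. {\<omega> \<in> space M. norm (Y q \<omega>) \<le> cc n})"
      then obtain n where h: "\<And>q. q \<in> \<rat> \<Longrightarrow> q \<in> {0..T} \<Longrightarrow> \<omega> \<in> space M \<and> norm (Y q \<omega>) \<le> cc n" by blast
      have \<omega>: "\<omega> \<in> space M" using h[of 0] T(1) by auto
      have "norm (Y t \<omega>) < r" if t: "t \<in> {0..T}" for t
      proof -
        have "norm (Y t \<omega>) \<le> cc n"
          by (rule dense_le[OF continuous_on_norm[OF Ycb[OF \<omega>]] T(1) _ t]) (use h in blast)
        moreover have "cc n < r" by (simp add: cc_def)
        ultimately show ?thesis by simp
      qed
      thus "\<omega> \<in> EY" using \<omega> by (simp add: EY_def)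
    qed
  qed
  have EYm: "EY \<in> sets M"
    unfolding EY_eq
  proof (rule sets.countable_UN'')
    show "countable (UNIV :: nat set)" by simp
    show "(\<Inter>q\<in>\<rat> \<inter> {0..T}. {\<omega> \<in> space M. norm (Y q \<omega>) \<le> cc n}) \<in> sets M" for n
    proof (rule sets.countable_INT'[OF ctR neR], clarify)
      fix q assume "q \<in> \<rat>" "q \<in> {0..T}"
      hence [measurable]: "(\<lambda>\<omega>. norm (Y q \<omega>)) \<in> borel_measurable M" using Ym by auto
      show "{\<omega> \<in> space M. norm (Y q \<omega>) \<le> cc n} \<in> sets M" by measurable
    qed
  qed
  define c0 :: real where "c0 = 0.1 * sqrt (real CARD('n))"
  define f where "f \<omega> t = norm (ou_integral \<alpha> B t \<omega>)" for \<omega> t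
  define Bad where "Bad = {\<omega> \<in> space M. (SUP t\<in>{0..T}. norm (ou_integral \<alpha> B t \<omega>)) > c0}"
  have fc: "continuous_on {0..T} (f \<omega>)" if "\<omega> \<in> space M" for \<omega>
    unfolding f_def by (intro continuous_on_norm ou_cont Bcb that)
  have bdd: "bdd_above (f \<omega> ` {0..T})" if "\<omega> \<in> space M" for \<omega>
    by (intro bounded_imp_bdd_above compact_imp_bounded compact_continuous_image fc that compact_Icc)
  have ne: "{0..T} \<noteq> {}" using T(1) by simp
  have Bad_eq: "Bad = (\<Union>q\<in>\<rat> \<inter> {0..T}. {\<omega> \<in> space M. f \<omega> q > c0})"
  proof
    show "Bad \<subseteq> (\<Union>q\<in>\<rat> \<inter> {0..T}. {\<omega> \<in> space M. f \<omega> q > c0})"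
    proof
      fix \<omega> assume "\<omega> \<in> Bad"
      hence \<omega>: "\<omega> \<in> space M" and sup: "c0 < (SUP t\<in>{0..T}. f \<omega> t)" by (auto simp: Bad_def f_def)
      obtain t where t: "t \<in> {0..T}" and ct: "c0 < f \<omega> t"
        using sup less_cSUP_iff[OF ne bdd[OF \<omega>]] by blast
      show "\<omega> \<in> (\<Union>q\<in>\<rat> \<inter> {0..T}. {\<omega> \<in> space M. f \<omega> q > c0})"
      proof (rule ccontr)
        assume "\<omega> \<notin> (\<Union>q\<in>\<rat> \<inter> {0..T}. {\<omega> \<in> space M. f \<omega> q > c0})"
        hence "\<And>q. q \<in> \<rat> \<Longrightarrow> q \<in> {0..T} \<Longrightarrow> f \<omega> q \<le> c0" using \<omega> by force
        hence "f \<omega> t \<le> c0" by (rule dense_le[OF fc[OF \<omega>] T(1) _ t])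
        thus False using ct by simp
      qed
    qed
    show "(\<Union>q\<in>\<rat> \<inter> {0..T}. {\<omega> \<in> space M. f \<omega> q > c0}) \<subseteq> Bad"
    proof clarify
      fix q \<omega> assume q: "q \<in> \<rat>" "q \<in> {0..T}" and \<omega>: "\<omega> \<in> space M" and c: "c0 < f \<omega> q"
      have "f \<omega> q \<le> (SUP t\<in>{0..T}. f \<omega> t)" by (rule cSUP_upper[OF q(2) bdd[OF \<omega>]])
      thus "\<omega> \<in> Bad" using c \<omega> by (simp add: Bad_def f_def)
    qed
  qed
  have Badm: "Bad \<in> sets M"
    unfolding Bad_eq
  proof (rule sets.countable_UN''[OF ctR])
    fix q assume "q \<in> \<rat> \<inter> {0..T}"
    hence [measurable]: "(\<lambda>\<omega>. ou_integral \<alpha> B q \<omega>) \<in> borel_measurable M" using oum by auto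
    show "{\<omega> \<in> space M. f \<omega> q > c0} \<in> sets M" unfolding f_def by measurable
  qed
  have GsubEY: "space M - Bad \<subseteq> EY"
  proof
    fix \<omega> assume "\<omega> \<in> space M - Bad"
    hence \<omega>: "\<omega> \<in> space M" and sup: "(SUP t\<in>{0..T}. f \<omega> t) \<le> c0" by (auto simp: Bad_def f_def)
    have "norm (Y t \<omega>) < r" if t: "t \<in> {0..T}" for t
    proof -
      have ft: "f \<omega> t \<le> c0" using cSUP_upper[OF t bdd[OF \<omega>]] sup by linarith
      have e1: "exp (- \<alpha> * t) \<le> 1" using apos t by simp
      have s2: "sqrt 2 < 2" by (rule sqrt2_less_2)
      have "norm (Y t \<omega>) \<le> norm (exp (- \<alpha> * t) *\<^sub>R x0) + norm (sqrt 2 *\<^sub>R ou_integral \<alpha> B t \<omega>)"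
        unfolding Y_def by (rule norm_triangle_ineq)
      also have "\<dots> = exp (- \<alpha> * t) * norm x0 + sqrt 2 * f \<omega> t" by (simp add: f_def)
      also have "\<dots> \<le> 1 * (1.1 * sqrt d) + 2 * c0"
        by (intro add_mono mult_mono e1 x0d ft less_imp_le[OF s2]) (auto simp: f_def)
      also have "\<dots> < r" using sd by (simp add: c0_def r_def d_def)
      finally show ?thesis .
    qed
    thus "\<omega> \<in> EY" using \<omega> by (simp add: EY_def)
  qed
  have univ: "measure M Bad \<le> 3 * \<alpha> * exp (- c * real CARD('n))"
    unfolding Bad_def c0_def using universal[OF d T(1) T(2) order_refl BM] .
  have "1 - 3 * \<alpha> * exp (- c * real CARD('n)) \<le> 1 - measure M Bad" using univ by simp
  also have "\<dots> = measure M (space M - Bad)" using P.prob_compl[OF Badm] by simp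
  also have "\<dots> \<le> measure M EY" by (rule P.finite_measure_mono[OF GsubEY EYm])
  also have "\<dots> = measure M E" using EEY by simp
  finally show ?thesis by (simp add: E_def)
qed
end
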